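(* For all integers $r,n,\nu\ge 0$ and all real $x$, $$\frac{d^\nu}{dx^\nu}H_{r,n}(x)=r!\,n!\sum_{j=0}^{\nu}\alpha_{j,\nu}\,\frac{H_{r-\nu+j,\,n-j}(x)}{(r-\nu+j)!\,(n-j)!},$$ where any term with $r-\nu+j<0$ or $n-j<0$ is interpreted as $0$, and the numbers $\alpha_{j,\nu}$ ($0\le j\le\nu$) are defined by $\alpha_{0,\nu}=2^\nu$, $\alpha_{\nu,\nu}=1$, and $\alpha_{j,\nu}=2\alpha_{j,\nu-1}+\alpha_{j-1,\nu-1}$ for $1\le j<\nu$.
   Context: For integers $m,n\ge 0$, the two-index Hermite polynomial is $H_{m,n}(x)=\left(-\frac{d}{dx}+2x\right)^m(x^n)$, i.e. the operator $f\mapsto -f'+2xf$ applied $m$ times to $x^n$; by convention $H_{m,n}=0$ whenever $m<0$ or $n<0$. *)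

theory Defs
  imports "HOL-Analysis.Analysis"
begin

definition hop :: "(real \<Rightarrow> real) \<Rightarrow> real \<Rightarrow> real" where
  "hop f = (\<lambda>x. - deriv f x + 2 * x * f x)"

definition H :: "int \<Rightarrow> int \<Rightarrow> real \<Rightarrow> real" where
  "H m n = (if m < 0 \<or> n < 0 then (\<lambda>_. 0) else (hop ^^ nat m) (\<lambda>x. x ^ nat n))"

fun alpha :: "nat \<Rightarrow> nat \<Rightarrow> real" where
  "alpha j 0 = (if j = 0 then 1 else 0)"
| "alpha j (Suc v) = (if j = 0 then 2 ^ Suc v else if j = Suc v then 1
      else if j < Suc v then 2 * alpha j v + alpha (j - 1) v else 0)"

end

theory Submission
  imports Defs "HOL-Computational_Algebra.Polynomial"
begin

fun Hp :: "nat \<Rightarrow> nat \<Rightarrow> real poly" where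
  "Hp 0 n = monom 1 n"
| "Hp (Suc m) n = - pderiv (Hp m n) + [:0,2:] * Hp m n"

lemma pderiv_sum': "pderiv (sum f A) = (\<Sum>x\<in>A. pderiv (f x))"
  using higher_pderiv_sum[of 1 f A] by simp

lemma smult_sum_right: "smult c (sum f A) = (\<Sum>x\<in>A. smult c (f x))"
  by (induction A rule: infinite_finite_induct) (simp_all add: smult_add_right)

lemma pderiv_X2: "pderiv ([:0,2:] * p) = [:0,2:] * pderiv p + smult 2 (p::real poly)"
  by (simp add: pderiv_mult pderiv_pCons pderiv_smult)

lemma Hp_deriv:
  "pderiv (Hp m n) = smult (real n) (Hp m (n-1)) + smult (real (2*m)) (Hp (m-1) n)"
proof (induction m arbitrary: n)
  case 0
  then show ?case by (simp add: pderiv_monom smult_monom)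
next
  case (Suc m)
  have "pderiv (Hp (Suc m) n) = - pderiv (pderiv (Hp m n)) + [:0,2:] * pderiv (Hp m n) + smult 2 (Hp m n)"
    by (simp only: Hp.simps pderiv_add pderiv_minus pderiv_X2 add.assoc)
  also have "\<dots> = smult (real n) (Hp (Suc m) (n-1))
      + smult (real (2*m)) (- pderiv (Hp (m-1) n) + [:0,2:] * Hp (m-1) n) + smult 2 (Hp m n)"
  proof -
    have e1: "pderiv (pderiv (Hp m n)) = smult (real n) (pderiv (Hp m (n-1))) + smult (real (2*m)) (pderiv (Hp (m-1) n))"
      by (simp only: Suc.IH pderiv_add pderiv_smult)
    have e2: "[:0,2:] * pderiv (Hp m n) = smult (real n) ([:0,2:] * Hp m (n-1)) + smult (real (2*m)) ([:0,2:] * Hp (m-1) n)"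
      by (simp only: Suc.IH distrib_left mult_smult_right)
    show ?thesis unfolding e1 e2 Hp.simps(2)
      by (simp only: smult_add_right smult_minus_right algebra_simps)
  qed
  also have "\<dots> = smult (real n) (Hp (Suc m) (n-1)) + smult (real (2*Suc m)) (Hp m n)"
  proof (cases m)
    case 0 then show ?thesis by simp
  next
    case (Suc k)
    have "smult (real (2*m)) (- pderiv (Hp (m-1) n) + [:0,2:]*Hp (m-1) n) = smult (real (2*m)) (Hp m n)"
      using Suc by simp
    then show ?thesis by (simp only: add.assoc smult_add_left[symmetric]) (simp add: add.commute)
  qed
  finally show ?case by simp
qed

lemma deriv_poly: "deriv (poly p) = poly (pderiv p)"
  by (rule ext) (rule DERIV_imp_deriv[OF poly_DERIV])

lemma Hp_H: "(hop ^^ m) (\<lambda>x. x ^ n) = poly (Hp m n)"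
proof (induction m)
  case 0
  then show ?case by (simp add: poly_monom fun_eq_iff)
next
  case (Suc m)
  then show ?case by (simp add: Suc.IH) (simp add: hop_def deriv_poly fun_eq_iff algebra_simps)
qed

lemma deriv_iter_poly: "(deriv ^^ v) (poly p) = poly ((pderiv ^^ v) p)"
proof (induction v arbitrary: p)
  case 0 then show ?case by simp
next
  case (Suc v)
  then show ?case by (simp only: funpow_Suc_right o_apply deriv_poly)
qed

lemma pderiv_iter_smult: "(pderiv ^^ v) (smult c p) = smult c ((pderiv ^^ v) p)"
  by (induction v) (simp_all add: pderiv_smult)

definition G :: "int \<Rightarrow> int \<Rightarrow> real poly" where
  "G m n = (if m < 0 \<or> n < 0 then 0 else smult (1 / (fact (nat m) * fact (nat n))) (Hp (nat m) (nat n)))"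

lemma G_deriv: "pderiv (G m n) = G m (n-1) + smult 2 (G (m-1) n)"
proof (cases "m < 0 \<or> n < 0")
  case True then show ?thesis by (auto simp: G_def)
next
  case False
  then obtain a b where ab: "m = int a" "n = int b"
    by (metis nonneg_int_cases not_less)
  have "pderiv (G m n) = smult (1 / (fact a * fact b))
      (smult (real b) (Hp a (b-1)) + smult (real (2*a)) (Hp (a-1) b))"
    by (simp add: G_def ab pderiv_smult Hp_deriv)
  also have "\<dots> = G m (n-1) + smult 2 (G (m-1) n)"
  proof -
    have A: "smult (1 / (fact a * fact b)) (smult (real b) (Hp a (b-1))) = G m (n-1)"
    proof (cases b)
      case 0 then show ?thesis by (simp add: G_def ab)
    next
      case (Suc c)
      have fb: "(fact b::real) = real b * fact c" by (simp add: Suc)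
      have "real b \<noteq> 0" using Suc by simp
      then have e: "1 / (fact a * fact b) * real b = (1 / (fact a * fact c) :: real)"
        unfolding fb by (simp add: field_simps)
      have "G m (n-1) = smult (1 / (fact a * fact c)) (Hp a c)" by (simp add: G_def ab Suc)
      then show ?thesis using e Suc by simp
    qed
    have B: "smult (1 / (fact a * fact b)) (smult (real (2*a)) (Hp (a-1) b)) = smult 2 (G (m-1) n)"
    proof (cases a)
      case 0 then show ?thesis by (simp add: G_def ab)
    next
      case (Suc c)
      have fa: "(fact a::real) = real a * fact c" by (simp add: Suc)
      have "real a \<noteq> 0" using Suc by simp
      then have e: "1 / (fact a * fact b) * real (2*a) = (2 * (1 / (fact c * fact b)) :: real)"
        unfolding fa by (simp add: field_simps)
      have "G (m-1) n = smult (1 / (fact c * fact b)) (Hp c b)" by (simp add: G_def ab Suc)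
      then show ?thesis using e Suc by simp
    qed
    show ?thesis using A B by (simp add: smult_add_right)
  qed
  finally show ?thesis .
qed

lemma alpha_Suc: "alpha j (Suc v) = 2 * alpha j v + (if j = 0 then 0 else alpha (j-1) v)"
proof -
  have gt: "j > v \<Longrightarrow> alpha j v = 0" for j v by (cases v) auto
  have diag: "alpha v v = 1" for v by (cases v) auto
  have z: "alpha 0 v = 2 ^ v" for v by (cases v) auto
  consider "j = 0" | "j = Suc v" | "0 < j \<and> j < Suc v" | "j > Suc v" by linarith
  then show ?thesis
  proof cases
    case 1 then show ?thesis by (simp add: z)
  next
    case 2 then show ?thesis by (simp add: diag gt)
  next
    case 3 then show ?thesis by simp
  next
    case 4
    have "alpha j v = 0" "alpha (j-1) v = 0" using 4 by (auto intro!: gt)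
    then show ?thesis using 4 by simp
  qed
qed

lemma G_iter:
  "(pderiv ^^ v) (G m n) = (\<Sum>j\<le>v. smult (alpha j v) (G (m - int v + int j) (n - int j)))"
proof (induction v)
  case 0 then show ?case by simp
next
  case (Suc v)
  define F where "F j = G (m - int (Suc v) + int j) (n - int j)" for j
  have "(pderiv ^^ Suc v) (G m n) = pderiv ((pderiv ^^ v) (G m n))" by simp
  also have "\<dots> = (\<Sum>j\<le>v. smult (alpha j v) (F (Suc j) + smult 2 (F j)))"
    unfolding Suc.IH pderiv_sum' pderiv_smult G_deriv F_def
    by (intro sum.cong refl) (simp add: algebra_simps)
  also have "\<dots> = (\<Sum>j\<le>v. smult (alpha j v) (F (Suc j))) + smult 2 (\<Sum>j\<le>v. smult (alpha j v) (F j))"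
    by (simp add: smult_add_right sum.distrib smult_sum_right algebra_simps)
  also have "\<dots> = (\<Sum>j\<le>Suc v. smult (alpha j (Suc v)) (F j))"
  proof -
    have gt: "alpha (Suc v) v = 0" by (cases v) auto
    have "(\<Sum>j\<le>Suc v. smult (alpha j (Suc v)) (F j))
      = (\<Sum>j\<le>Suc v. smult (2 * alpha j v) (F j)) + (\<Sum>j\<le>Suc v. smult (if j = 0 then 0 else alpha (j-1) v) (F j))"
      by (simp del: alpha.simps add: alpha_Suc smult_add_left sum.distrib)
    also have "(\<Sum>j\<le>Suc v. smult (2 * alpha j v) (F j)) = smult 2 (\<Sum>j\<le>v. smult (alpha j v) (F j))"
      by (simp add: gt smult_sum_right)
    also have "(\<Sum>j\<le>Suc v. smult (if j = 0 then 0 else alpha (j-1) v) (F j)) = (\<Sum>j\<le>v. smult (alpha j v) (F (Suc j)))"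
      by (subst sum.atMost_Suc_shift) simp
    finally show ?thesis by simp
  qed
  finally show ?case by (simp add: F_def)
qed

theorem mainTheorem15:
  fixes r n \<nu> :: nat and x :: real
  shows "(deriv ^^ \<nu>) (H (int r) (int n)) x =
    fact r * fact n * (\<Sum>j = 0..\<nu>. alpha j \<nu> *
      (if int r - int \<nu> + int j < 0 \<or> int n - int j < 0 then 0
       else H (int r - int \<nu> + int j) (int n - int j) x /
            (fact (nat (int r - int \<nu> + int j)) * fact (nat (int n - int j)))))"
proof -
  have HG: "H (int r) (int n) = poly (smult (fact r * fact n) (G (int r) (int n)))"
    by (simp add: H_def G_def Hp_H fun_eq_iff)
  have PG: "poly (G a b) x = (if a < 0 \<or> b < 0 then 0
       else H a b x / (fact (nat a) * fact (nat b)))" for a b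
    by (simp add: G_def H_def Hp_H)
  show ?thesis
    unfolding HG deriv_iter_poly pderiv_iter_smult G_iter
    by (simp add: poly_sum PG atLeast0AtMost)
qed

end
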